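(* Let $f:\mathbb R^n\to\mathbb R$ be convex, differentiable and $L$-Lipschitz smooth, let $g:\mathbb R^n\to\mathbb R\cup\{+\infty\}$ be proper, closed and convex, and let $F=f+g$. Let $\epsilon\ge0$, $B\ge0$, $\rho\ge0$, $x\in\mathbb R^n$, and let $\tilde x$ satisfy $\mathbf 0\in\nabla f(x)-(B+\rho)(x-\tilde x)+\partial_\epsilon g(\tilde x)$ (i.e. $\tilde x\approx_\epsilon T_{B+\rho}(x)$) together with the line search condition $D_f(\tilde x,x)\le\frac B2\|x-\tilde x\|^2$. Then for all $z\in\mathbb R^n$, $$-\epsilon\le F(z)-F(\tilde x)+\frac{B+\rho}{2}\|x-z\|^2-\frac{B+\rho}{2}\|z-\tilde x\|^2-\frac\rho2\|\tilde x-x\|^2.$$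
   Context: $D_f(u,w):=f(u)-f(w)-\langle\nabla f(w),u-w\rangle$ (Bregman divergence). $f$ is $L$-Lipschitz smooth means $D_f(u,w)\le\frac L2\|u-w\|^2$ for all $u,w$. For proper $h$ and $\epsilon\ge0$, $\partial_\epsilon h(\bar x)=\{v:\langle v,u-\bar x\rangle\le h(u)-h(\bar x)+\epsilon\ \forall u\in\mathbb R^n\}$ if $\bar x\in\operatorname{dom}h$, and $\emptyset$ otherwise. *)

theory Defs
  imports "HOL-Analysis.Analysis" "HOL-Library.Extended_Real"
begin

text \<open>Extended-real-valued functions g : R^n -> R \<union> {+\<infinity>}, modelled as maps into ereal
  that never take the value -\<infinity>.\<close>

definition edom :: "('a \<Rightarrow> ereal) \<Rightarrow> 'a set" where
  "edom h = {u. h u < \<infinity>}"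

definition proper_fun :: "('a \<Rightarrow> ereal) \<Rightarrow> bool" where
  "proper_fun h \<longleftrightarrow> (\<forall>u. h u \<noteq> -\<infinity>) \<and> edom h \<noteq> {}"

definition closed_fun :: "('a::topological_space \<Rightarrow> ereal) \<Rightarrow> bool" where
  "closed_fun h \<longleftrightarrow> closed {(u, t::real). h u \<le> ereal t}"

definition convex_efun :: "('a::real_vector \<Rightarrow> ereal) \<Rightarrow> bool" where
  "convex_efun h \<longleftrightarrow> (\<forall>u w (t::real). 0 \<le> t \<and> t \<le> 1 \<longrightarrow>
      h ((1 - t) *\<^sub>R u + t *\<^sub>R w) \<le> ereal (1 - t) * h u + ereal t * h w)"

definition bregman :: "('a::real_inner \<Rightarrow> real) \<Rightarrow> ('a \<Rightarrow> 'a) \<Rightarrow> 'a \<Rightarrow> 'a \<Rightarrow> real" where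
  "bregman f gradf u w = f u - f w - inner (gradf w) (u - w)"

definition lipschitz_smooth :: "('a::real_inner \<Rightarrow> real) \<Rightarrow> ('a \<Rightarrow> 'a) \<Rightarrow> real \<Rightarrow> bool" where
  "lipschitz_smooth f gradf L \<longleftrightarrow> (\<forall>u w. bregman f gradf u w \<le> L / 2 * (norm (u - w))\<^sup>2)"

definition eps_subdiff :: "('a::real_inner \<Rightarrow> ereal) \<Rightarrow> real \<Rightarrow> 'a \<Rightarrow> 'a set" where
  "eps_subdiff h \<epsilon> xb = (if xb \<in> edom h then
     {v. \<forall>u. ereal (inner v (u - xb)) \<le> h u - h xb + ereal \<epsilon>} else {})"

end

theory Submission
  imports Defs
begin

lemma grad_ineq:
  fixes f :: "'a::euclidean_space \<Rightarrow> real" and gradf :: "'a \<Rightarrow> 'a"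
  assumes cv: "convex_on UNIV f"
    and fg: "\<And>w. (f has_derivative (\<lambda>h. inner (gradf w) h)) (at w)"
  shows "f z - f x \<ge> inner (gradf x) (z - x)"
proof -
  define d where "d = z - x"
  define phi where "phi = (\<lambda>t::real. f (x + t *\<^sub>R d))"
  have cphi: "convex_on UNIV phi"
  proof (rule convex_onI)
    fix t u v :: real assume t: "0 < t" "t < 1"
    have "x + ((1 - t) * u + t * v) *\<^sub>R d = (1 - t) *\<^sub>R (x + u *\<^sub>R d) + t *\<^sub>R (x + v *\<^sub>R d)"
      by (simp add: algebra_simps)
    then show "phi ((1 - t) *\<^sub>R u + t *\<^sub>R v) \<le> (1 - t) * phi u + t * phi v"
      unfolding phi_def using convex_onD[OF cv, of t "x + u *\<^sub>R d" "x + v *\<^sub>R d"] t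
      by simp
  qed auto
  have "((\<lambda>t::real. x + t *\<^sub>R d) has_derivative (\<lambda>t. t *\<^sub>R d)) (at 0)"
    by (auto intro!: derivative_eq_intros)
  moreover have "(f has_derivative (\<lambda>h. inner (gradf x) h)) (at (x + (0::real) *\<^sub>R d))"
    using fg[of x] by simp
  ultimately have "((\<lambda>t. f (x + t *\<^sub>R d)) has_derivative (\<lambda>t. inner (gradf x) (t *\<^sub>R d))) (at 0)"
    by (rule has_derivative_compose)
  then have "(phi has_derivative (\<lambda>t. inner (gradf x) (t *\<^sub>R d))) (at 0)"
    unfolding phi_def by (simp only:)
  hence "(phi has_derivative (\<lambda>t. t * inner (gradf x) d)) (at 0)" by simp
  hence "(phi has_field_derivative inner (gradf x) d) (at 0 within UNIV)"
  proof -
    have "(\<lambda>t. t * inner (gradf x) d) = (*) (inner (gradf x) d)" by (rule ext) simp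
    thus ?thesis using \<open>(phi has_derivative (\<lambda>t. t * inner (gradf x) d)) (at 0)\<close>
      by (simp add: has_field_derivative_def)
  qed
  from convex_on_imp_above_tangent[OF cphi _ _ _ this, of 1]
  have "phi 1 - phi 0 \<ge> inner (gradf x) d" by simp
  thus ?thesis unfolding phi_def d_def by simp
qed

theorem theorem2p15:
  fixes f :: "'a::euclidean_space \<Rightarrow> real" and gradf :: "'a \<Rightarrow> 'a"
    and g :: "'a \<Rightarrow> ereal" and L \<epsilon> B \<rho> :: real and x xt :: "'a"
  assumes f_convex: "convex_on UNIV f"
    and f_grad: "\<And>w. (f has_derivative (\<lambda>h. inner (gradf w) h)) (at w)"
    and f_smooth: "lipschitz_smooth f gradf L"
    and g_proper: "proper_fun g" and g_closed: "closed_fun g" and g_convex: "convex_efun g"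
    and eps: "\<epsilon> \<ge> 0" and Bnn: "B \<ge> 0" and rho: "\<rho> \<ge> 0"
    and prox: "(B + \<rho>) *\<^sub>R (x - xt) - gradf x \<in> eps_subdiff g \<epsilon> xt"
    and ls: "bregman f gradf xt x \<le> B / 2 * (norm (x - xt))\<^sup>2"
  shows "\<forall>z. - ereal \<epsilon> \<le> (ereal (f z) + g z) - (ereal (f xt) + g xt)
            + ereal ((B + \<rho>) / 2 * (norm (x - z))\<^sup>2 - (B + \<rho>) / 2 * (norm (z - xt))\<^sup>2
                     - \<rho> / 2 * (norm (xt - x))\<^sup>2)"
proof
  fix z
  define v where "v = (B + \<rho>) *\<^sub>R (x - xt) - gradf x"
  have dom: "xt \<in> edom g" using prox by (simp add: eps_subdiff_def split: if_splits)
  have sub: "ereal (inner v (z - xt)) \<le> g z - g xt + ereal \<epsilon>"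
    using prox dom by (simp add: eps_subdiff_def v_def)
  have ninf: "\<And>u. g u \<noteq> -\<infinity>" using g_proper by (simp add: proper_fun_def)
  obtain gx where gx: "g xt = ereal gx" using dom ninf[of xt] unfolding edom_def
    by (cases "g xt") auto
  have fz: "f z - f x \<ge> inner (gradf x) (z - x)" by (rule grad_ineq[OF f_convex f_grad])
  have fx: "f xt - f x - inner (gradf x) (xt - x) \<le> B / 2 * (norm (x - xt))\<^sup>2"
    using ls by (simp add: bregman_def)
  define Q where "Q = (B + \<rho>) / 2 * (norm (x - z))\<^sup>2 - (B + \<rho>) / 2 * (norm (z - xt))\<^sup>2
                     - \<rho> / 2 * (norm (xt - x))\<^sup>2"
  have key: "Q = - (B + \<rho>) * inner (x - xt) (z - xt) + B / 2 * (norm (x - xt))\<^sup>2"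
  proof -
    have e1: "(norm (x - z))\<^sup>2 = (norm (x - xt))\<^sup>2 + (norm (z - xt))\<^sup>2 - 2 * inner (x - xt) (z - xt)"
      by (simp add: power2_norm_eq_inner inner_diff_left inner_diff_right inner_commute)
    have e2: "norm (xt - x) = norm (x - xt)" by (rule norm_minus_commute)
    have gen: "\<And>p a b::real. (B + \<rho>) / 2 * (a + b - 2 * p) - (B + \<rho>) / 2 * b - \<rho> / 2 * a
        = - (B + \<rho>) * p + B / 2 * a" by (simp add: field_simps)
    show ?thesis unfolding Q_def e1 e2 by (rule gen)
  qed
  have lin: "inner v (z - xt) = (B + \<rho>) * inner (x - xt) (z - xt) - inner (gradf x) (z - x)
      - inner (gradf x) (x - xt)"
    unfolding v_def by (simp add: inner_diff_left inner_diff_right algebra_simps)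
  show "- ereal \<epsilon> \<le> (ereal (f z) + g z) - (ereal (f xt) + g xt) + ereal Q"
  proof (cases "g z")
    case (real r)
    have "inner v (z - xt) \<le> r - gx + \<epsilon>" using sub real gx by simp
    moreover have "inner (gradf x) (x - xt) = - inner (gradf x) (xt - x)"
      by (simp add: inner_diff_right)
    ultimately have "- \<epsilon> \<le> f z + r - (f xt + gx) + Q"
      using fz fx key lin by linarith
    thus ?thesis using real gx by simp
  next
    case PInf thus ?thesis using gx by simp
  next
    case MInf thus ?thesis using ninf by simp
  qed
qed

end
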